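(* Let $|\psi\rangle,|\phi\rangle\in\mathcal{H}'$ be pure states with $\mathcal{C}(|\phi\rangle)>\mathcal{C}(|\psi\rangle)$. Then the maximum probability of transforming $|\psi\rangle$ into $|\phi\rangle$ using Z$_2$-invariant operations is $$P(|\psi\rangle\to|\phi\rangle)=\frac{\mathcal{C}(|\psi\rangle)}{\mathcal{C}(|\phi\rangle)}.$$
   Context: $\mathcal{H}'$ is a two-dimensional Hilbert space with orthonormal basis $|0\rangle,|1\rangle$; $\pi=|0\rangle\langle0|-|1\rangle\langle1|$. A Z$_2$-invariant operation is a completely positive, trace-nonincreasing linear map $\mathcal{E}$ on operators on $\mathcal{H}'$ with $\mathcal{E}(\pi X\pi)=\pi\mathcal{E}(X)\pi$ for all $X$. The probability of transforming $|\psi\rangle$ into $|\phi\rangle$ is the largest $\lambda$ such that some Z$_2$-invariant operation $\mathcal{E}$ satisfies $\mathcal{E}(|\psi\rangle\langle\psi|)=\lambda|\phi\rangle\langle\phi|$. For a pure state $|\chi\rangle$, $\mathcal{C}(|\chi\rangle)=2\min\{|\langle0|\chi\rangle|^2,|\langle1|\chi\rangle|^2\}$. *)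

theory Defs
  imports Complex_Main "Jordan_Normal_Form.Matrix"
begin

text \<open>Operators on the qubit space H' = C^2 are 2x2 complex matrices (basis |0>,|1>).
  Pure states are unit vectors in C^2.\<close>

definition psd :: "nat \<Rightarrow> complex mat \<Rightarrow> bool" where
  "psd n A \<longleftrightarrow> A \<in> carrier_mat n n \<and>
     (\<forall>v \<in> carrier_vec n.
        (\<Sum>i<n. \<Sum>j<n. cnj (v $ i) * A $$ (i, j) * v $ j) \<in> \<real> \<and>
        0 \<le> Re (\<Sum>i<n. \<Sum>j<n. cnj (v $ i) * A $$ (i, j) * v $ j))"

definition lin_map2 :: "(complex mat \<Rightarrow> complex mat) \<Rightarrow> bool" where
  "lin_map2 E \<longleftrightarrow>
     (\<forall>X \<in> carrier_mat 2 2. E X \<in> carrier_mat 2 2) \<and>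
     (\<forall>X \<in> carrier_mat 2 2. \<forall>Y \<in> carrier_mat 2 2. \<forall>a b.
        E (a \<cdot>\<^sub>m X + b \<cdot>\<^sub>m Y) = a \<cdot>\<^sub>m E X + b \<cdot>\<^sub>m E Y)"

text \<open>id_k \<otimes> E applied to a (2k)x(2k) matrix viewed as a k x k array of 2x2 blocks.\<close>
definition ampl :: "nat \<Rightarrow> (complex mat \<Rightarrow> complex mat) \<Rightarrow> complex mat \<Rightarrow> complex mat" where
  "ampl k E M = mat (2*k) (2*k) (\<lambda>(i, j).
      E (mat 2 2 (\<lambda>(r, s). M $$ (2 * (i div 2) + r, 2 * (j div 2) + s))) $$ (i mod 2, j mod 2))"

definition completely_positive :: "(complex mat \<Rightarrow> complex mat) \<Rightarrow> bool" where
  "completely_positive E \<longleftrightarrow>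
     (\<forall>k. \<forall>M. psd (2*k) M \<longrightarrow> psd (2*k) (ampl k E M))"

definition trace_nonincreasing :: "(complex mat \<Rightarrow> complex mat) \<Rightarrow> bool" where
  "trace_nonincreasing E \<longleftrightarrow> (\<forall>X. psd 2 X \<longrightarrow> Re (E X $$ (0,0) + E X $$ (1,1)) \<le> Re (X $$ (0,0) + X $$ (1,1)))"

definition piZ :: "complex mat" where
  "piZ = mat 2 2 (\<lambda>(i, j). if i = j then (if i = 0 then 1 else -1) else 0)"

definition Z2_invariant_op :: "(complex mat \<Rightarrow> complex mat) \<Rightarrow> bool" where
  "Z2_invariant_op E \<longleftrightarrow> lin_map2 E \<and> completely_positive E \<and> trace_nonincreasing E \<and>
     (\<forall>X \<in> carrier_mat 2 2. E (piZ * X * piZ) = piZ * E X * piZ)"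

definition pure_state :: "complex vec \<Rightarrow> bool" where
  "pure_state v \<longleftrightarrow> v \<in> carrier_vec 2 \<and> (cmod (v $ 0))\<^sup>2 + (cmod (v $ 1))\<^sup>2 = 1"

definition proj :: "complex vec \<Rightarrow> complex mat" where
  "proj v = mat 2 2 (\<lambda>(i, j). v $ i * cnj (v $ j))"

definition transf_set :: "complex vec \<Rightarrow> complex vec \<Rightarrow> real set" where
  "transf_set \<psi> \<phi> = {p. \<exists>E. Z2_invariant_op E \<and> E (proj \<psi>) = complex_of_real p \<cdot>\<^sub>m proj \<phi>}"

definition coh :: "complex vec \<Rightarrow> real" where
  "coh v = 2 * min ((cmod (v $ 0))\<^sup>2) ((cmod (v $ 1))\<^sup>2)"

end

theory Submission
  imports Defs
begin
lemma sum2: "(\<Sum>i<(2::nat). f i) = f 0 + (f (1::nat) :: 'a::comm_monoid_add)"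
  by (simp add: numeral_2_eq_2 lessThan_Suc add.commute)
lemma sum4: "(\<Sum>i<(4::nat). f i) = f 0 + f 1 + f 2 + (f (3::nat):: 'a::comm_monoid_add)"
  by (simp add: numeral_eq_Suc lessThan_Suc ac_simps)

lemma sum_two:
  fixes h :: "nat \<Rightarrow> 'a::comm_monoid_add"
  assumes "i < n" "j < n" "i \<noteq> j" "\<And>l. l < n \<Longrightarrow> l \<noteq> i \<Longrightarrow> l \<noteq> j \<Longrightarrow> h l = 0"
  shows "(\<Sum>l<n. h l) = h i + h j"
proof -
  have "(\<Sum>l<n. h l) = (\<Sum>l\<in>{i,j}. h l)"
    by (rule sum.mono_neutral_right) (use assms in auto)
  then show ?thesis using assms by simp
qed

lemma ccnj: "c * cnj c = (complex_of_real (cmod c))^2"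
  by (metis complex_norm_square of_real_power)
lemma cnj_sq: "cnj a * z * a = z * complex_of_real ((cmod a)^2)"
  by (simp only: complex_norm_square) (simp add: ac_simps)

lemma psd_form:
  assumes "psd n A" "i < n" "j < n" "i \<noteq> j"
  shows "cnj a * A$$(i,i) * a + cnj a * A$$(i,j) * b + cnj b * A$$(j,i) * a + cnj b * A$$(j,j) * b \<in> \<real> \<and>
    0 \<le> Re (cnj a * A$$(i,i) * a + cnj a * A$$(i,j) * b + cnj b * A$$(j,i) * a + cnj b * A$$(j,j) * b)"
proof -
  define v where "v = vec n (\<lambda>k. if k = i then a else if k = j then b else 0)"
  have v: "v \<in> carrier_vec n" unfolding v_def by simp
  have vi: "v $ i = a" "v $ j = b" using assms unfolding v_def by auto
  have vz: "\<And>k. k < n \<Longrightarrow> k \<noteq> i \<Longrightarrow> k \<noteq> j \<Longrightarrow> v $ k = 0" unfolding v_def by auto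
  have inner: "\<And>k. k < n \<Longrightarrow> (\<Sum>l<n. cnj (v $ k) * A $$ (k, l) * v $ l) = cnj (v $ k) * A $$ (k, i) * a + cnj (v $ k) * A $$ (k, j) * b"
  proof -
    fix k assume "k < n"
    have "(\<Sum>l<n. cnj (v $ k) * A $$ (k, l) * v $ l) = cnj (v $ k) * A $$ (k, i) * v $ i + cnj (v $ k) * A $$ (k, j) * v $ j"
      by (rule sum_two) (use assms vz in \<open>auto\<close>)
    then show "?thesis k" using vi by simp
  qed
  have "(\<Sum>k<n. \<Sum>l<n. cnj (v $ k) * A $$ (k, l) * v $ l) = (\<Sum>k<n. cnj (v $ k) * A $$ (k, i) * a + cnj (v $ k) * A $$ (k, j) * b)"
    using inner by simp
  also have "\<dots> = (cnj (v $ i) * A $$ (i, i) * a + cnj (v $ i) * A $$ (i, j) * b) + (cnj (v $ j) * A $$ (j, i) * a + cnj (v $ j) * A $$ (j, j) * b)"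
    by (rule sum_two) (use assms vz in \<open>auto\<close>)
  finally have eq: "(\<Sum>k<n. \<Sum>l<n. cnj (v $ k) * A $$ (k, l) * v $ l) = cnj a * A$$(i,i) * a + cnj a * A$$(i,j) * b + cnj b * A$$(j,i) * a + cnj b * A$$(j,j) * b"
    using vi by (simp add: ac_simps)
  show ?thesis using assms(1) v unfolding psd_def eq[symmetric] by blast
qed

lemma psd_entries:
  assumes "psd n A" "i < n" "j < n" "i \<noteq> j"
  shows "A$$(i,i) \<in> \<real>" "0 \<le> Re (A$$(i,i))" "A$$(j,i) = cnj (A$$(i,j))"
    "(cmod (A$$(i,j)))^2 \<le> Re (A$$(i,i)) * Re (A$$(j,j))"
proof -
  note F = psd_form[OF assms]
  from F[of 1 0] show "A$$(i,i) \<in> \<real>" "0 \<le> Re (A$$(i,i))" by auto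
  from F[of 0 1] have jj: "A$$(j,j) \<in> \<real>" "0 \<le> Re (A$$(j,j))" by auto
  from F[of 1 1] have h1: "Im (A$$(i,i) + A$$(i,j) + A$$(j,i) + A$$(j,j)) = 0"
    by (simp add: complex_is_Real_iff)
  from F[of 1 \<i>] have h2: "Im (A$$(i,i) + A$$(i,j) * \<i> - \<i> * A$$(j,i) + A$$(j,j)) = 0"
    by (simp add: complex_is_Real_iff algebra_simps)
  have ii: "Im (A$$(i,i)) = 0" using \<open>A$$(i,i) \<in> \<real>\<close> by (simp add: complex_is_Real_iff)
  have jj0: "Im (A$$(j,j)) = 0" using jj by (simp add: complex_is_Real_iff)
  show herm: "A$$(j,i) = cnj (A$$(i,j))"
    using h1 h2 ii jj0 by (simp add: complex_eq_iff)
  define c where "c = A$$(i,j)"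
  define x where "x = Re (A$$(i,i))"
  define y where "y = Re (A$$(j,j))"
  have Aii: "A$$(i,i) = complex_of_real x" using ii x_def by (simp add: complex_eq_iff)
  have Ajj: "A$$(j,j) = complex_of_real y" using jj0 y_def by (simp add: complex_eq_iff)
  have x0: "0 \<le> x" "0 \<le> y" using F[of 1 0] jj x_def y_def by auto
  have gen: "0 \<le> x * (cmod a)^2 + y * (cmod b)^2 + 2 * Re (cnj a * c * b)" for a b
  proof -
    have "0 \<le> Re (cnj a * A$$(i,i) * a + cnj a * A$$(i,j) * b + cnj b * A$$(j,i) * a + cnj b * A$$(j,j) * b)"
      using F by blast
    also have "cnj a * A$$(i,i) * a = complex_of_real (x * (cmod a)^2)"
      using Aii by (simp only: cnj_sq) simp
    also have "cnj b * A$$(j,j) * b = complex_of_real (y * (cmod b)^2)"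
      using Ajj by (simp only: cnj_sq) simp
    also have "cnj b * A$$(j,i) * a = cnj (cnj a * c * b)" using herm c_def by simp
    finally show ?thesis by (simp add: c_def algebra_simps)
  qed
  have cc: "Re (cnj c * c) = (cmod c)^2" by (simp add: cmod_power2) (simp add: power2_eq_square)
  show "(cmod (A$$(i,j)))^2 \<le> Re (A$$(i,i)) * Re (A$$(j,j))"
  proof (cases "y > 0")
    case True
    have e: "cnj (complex_of_real y) * c * (- cnj c) = - complex_of_real (y * (cmod c)^2)"
      by (simp add: ccnj[symmetric] algebra_simps)
    from gen[of "complex_of_real y" "- cnj c"] have "0 \<le> x*y^2 + y*(cmod c)^2 - 2*y*(cmod c)^2"
      unfolding e using x0 by simp
    hence "0 \<le> y * (x*y - (cmod c)^2)" by (simp add: algebra_simps power2_eq_square)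
    hence "(cmod c)^2 \<le> x*y" using True by (simp add: zero_le_mult_iff)
    then show ?thesis using c_def x_def y_def by simp
  next
    case False
    hence y0: "y = 0" using x0 by simp
    show ?thesis
    proof (cases "x > 0")
      case True
      have e: "cnj (- c) * c * (complex_of_real x) = - complex_of_real (x * (cmod c)^2)"
        by (simp add: ccnj[symmetric] algebra_simps)
      from gen[of "- c" "complex_of_real x"] have "0 \<le> x*(cmod c)^2 + y*x^2 - 2*x*(cmod c)^2"
        unfolding e using x0 by simp
      hence "0 \<le> x * (x*y - (cmod c)^2)" by (simp add: algebra_simps power2_eq_square)
      hence "(cmod c)^2 \<le> x*y" using True by (simp add: zero_le_mult_iff)
      then show ?thesis using c_def x_def y_def by simp
    next
      case False
      hence "x = 0" using x0 by simp
      have e: "cnj 1 * c * (- cnj c) = - complex_of_real ((cmod c)^2)"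
        by (simp add: ccnj[symmetric] algebra_simps)
      from gen[of 1 "- cnj c"] have "0 \<le> - 2*(cmod c)^2"
        unfolding e using y0 \<open>x = 0\<close> by simp
      hence "cmod c = 0" by simp
      then show ?thesis using c_def x_def y_def y0 by simp
    qed
  qed
qed
definition kmap :: "(nat \<Rightarrow> nat \<Rightarrow> complex) \<Rightarrow> complex mat \<Rightarrow> complex mat" where
  "kmap K X = mat 2 2 (\<lambda>(i,j). \<Sum>r<2. \<Sum>s<2. K i r * X$$(r,s) * cnj (K j s))"

lemma sum_split2: "(\<Sum>i<2*(k::nat). f i) = (\<Sum>I<k. \<Sum>t<2. (f (2*I+t) :: 'a::comm_monoid_add))"
  by (induction k) (simp_all add: sum2 ac_simps)

lemma kmap_cp: assumes "psd (2*k) M" shows "psd (2*k) (ampl k (kmap K) M)"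
proof -
  have M: "M \<in> carrier_mat (2*k) (2*k)" using assms unfolding psd_def by blast
  let ?A = "ampl k (kmap K) M"
  have A: "?A \<in> carrier_mat (2*k) (2*k)" unfolding ampl_def by simp
  have Aent: "?A $$ (2*I+t, 2*J+u) = (\<Sum>r<2. \<Sum>s<2. K t r * M$$(2*I+r,2*J+s) * cnj (K u s))"
    if "I < k" "J < k" "t < 2" "u < 2" for I J t u
    using that unfolding ampl_def kmap_def by (simp add: sum2)
  show ?thesis unfolding psd_def
  proof (intro conjI A ballI)
    fix v :: "complex vec" assume v: "v \<in> carrier_vec (2*k)"
    define w where "w = vec (2*k) (\<lambda>i'. \<Sum>t<2. cnj (K t (i' mod 2)) * v$(2*(i' div 2)+t))"
    have w: "w \<in> carrier_vec (2*k)" unfolding w_def by simp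
    have went: "w $ (2*I+r) = (\<Sum>t<2. cnj (K t r) * v$(2*I+t))" if "I < k" "r < 2" for I r
      using that unfolding w_def by simp
    have eq: "(\<Sum>i<2*k. \<Sum>j<2*k. cnj (v $ i) * ?A $$ (i, j) * v $ j) =
              (\<Sum>i<2*k. \<Sum>j<2*k. cnj (w $ i) * M $$ (i, j) * w $ j)"
    proof -
      have "(\<Sum>i<2*k. \<Sum>j<2*k. cnj (v $ i) * ?A $$ (i, j) * v $ j) =
         (\<Sum>I<k. \<Sum>t<2. \<Sum>J<k. \<Sum>u<2. cnj (v $ (2*I+t)) * ?A $$ (2*I+t, 2*J+u) * v $ (2*J+u))"
        by (simp add: sum_split2)
      also have "\<dots> = (\<Sum>I<k. \<Sum>J<k. \<Sum>t<2. \<Sum>u<2. cnj (v $ (2*I+t)) * (\<Sum>r<2. \<Sum>s<2. K t r * M$$(2*I+r,2*J+s) * cnj (K u s)) * v $ (2*J+u))"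
        apply (rule sum.cong[OF refl])
        apply (rule trans[OF sum.swap])
        apply (rule sum.cong[OF refl])+
        apply (simp add: Aent sum2)
        done
      also have "\<dots> = (\<Sum>I<k. \<Sum>J<k. \<Sum>r<2. \<Sum>s<2. cnj (w $ (2*I+r)) * M $$ (2*I+r, 2*J+s) * w $ (2*J+s))"
        apply (rule sum.cong[OF refl], rule sum.cong[OF refl])
        apply (simp add: went sum2)
        apply (simp add: algebra_simps)
        done
      also have "\<dots> = (\<Sum>i<2*k. \<Sum>j<2*k. cnj (w $ i) * M $$ (i, j) * w $ j)"
        apply (simp only: sum_split2)
        apply (rule sum.cong[OF refl])
        apply (rule sum.swap)
        done
      finally show ?thesis .
    qed
    from assms w have "(\<Sum>i<2*k. \<Sum>j<2*k. cnj (w $ i) * M $$ (i, j) * w $ j) \<in> \<real> \<and>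
        0 \<le> Re (\<Sum>i<2*k. \<Sum>j<2*k. cnj (w $ i) * M $$ (i, j) * w $ j)"
      unfolding psd_def by blast
    then show "(\<Sum>i<2*k. \<Sum>j<2*k. cnj (v $ i) * ?A $$ (i, j) * v $ j) \<in> \<real>"
       "0 \<le> Re (\<Sum>i<2*k. \<Sum>j<2*k. cnj (v $ i) * ?A $$ (i, j) * v $ j)"
      unfolding eq by auto
  qed
qed
lemma key_real:
  fixes a b a' b' x0 x1 y0 y1 U W p :: real
  assumes nn: "0 \<le> a" "0 \<le> b" "0 \<le> x0" "0 \<le> x1" "0 \<le> y0" "0 \<le> y1" "0 \<le> U" "0 \<le> W"
    and a'b': "0 < a'" "0 < b'"
    and tr: "x0 + x1 \<le> 1" "y0 + y1 \<le> 1"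
    and UW: "U^2 \<le> x0 * y1" "W^2 \<le> x1 * y0"
    and d0: "a * x0 + b * y0 = p * a'" and d1: "a * x1 + b * y1 = p * b'"
    and off: "p^2 * (a' * b') \<le> a * b * (U + W)^2"
    and p: "0 < p"
  shows "p * min a' b' \<le> min a b"
proof -
  define A0 where "A0 = a*x0"
  define A1 where "A1 = a*x1"
  define B0 where "B0 = b*y0"
  define B1 where "B1 = b*y1"
  have nn2: "0 \<le> A0" "0 \<le> A1" "0 \<le> B0" "0 \<le> B1" using nn by (auto simp: A0_def A1_def B0_def B1_def)
  define K where "K = a*b*U*W"
  have K0: "0 \<le> K" using nn by (simp add: K_def)
  have h1: "(A0+B0)*(A1+B1) \<le> a*b*(U+W)^2"
    using off d0 d1 by (simp add: A0_def A1_def B0_def B1_def power2_eq_square algebra_simps)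
  have h2: "a*b*U^2 \<le> A0*B1"
    using mult_left_mono[OF UW(1), of "a*b"] nn by (simp add: A0_def B1_def algebra_simps)
  have h3: "a*b*W^2 \<le> A1*B0"
    using mult_left_mono[OF UW(2), of "a*b"] nn by (simp add: A1_def B0_def algebra_simps)
  have h4: "K^2 \<le> (A0*A1)*(B0*B1)"
  proof -
    have "K^2 = (a*b*U^2)*(a*b*W^2)" by (simp add: K_def power2_eq_square algebra_simps)
    also have "\<dots> \<le> (A0*B1)*(A1*B0)"
      by (rule mult_mono[OF h2 h3]) (use nn nn2 in auto)
    finally show ?thesis by (simp add: algebra_simps)
  qed
  have h5: "A0*A1 + B0*B1 \<le> 2*K"
    using h1 h2 h3 by (simp add: K_def power2_eq_square algebra_simps)
  have PQ: "A0*A1 = B0*B1"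
  proof -
    have "(A0*A1 + B0*B1)^2 \<le> (2*K)^2"
      by (rule power_mono[OF h5]) (use nn2 in simp)
    hence "(A0*A1 - B0*B1)^2 \<le> 0" using h4 by (simp add: power2_eq_square algebra_simps)
    thus ?thesis by simp
  qed
  have ca: "B0 \<le> A1 \<or> B1 \<le> A0"
  proof (rule ccontr)
    assume "\<not> ?thesis"
    hence l: "A1 < B0" "A0 < B1" by auto
    have "A0*A1 \<le> B1*A1" using l nn2 by (intro mult_right_mono) auto
    also have "\<dots> < B1*B0" using l nn2 by (intro mult_strict_left_mono) auto
    finally have "A0*A1 < B0*B1" by (simp add: mult.commute)
    thus False using PQ by simp
  qed
  have cb: "A0 \<le> B1 \<or> A1 \<le> B0"
  proof (rule ccontr)
    assume "\<not> ?thesis"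
    hence l: "B1 < A0" "B0 < A1" by auto
    have "B0*B1 \<le> A1*B1" using l nn2 by (intro mult_right_mono) auto
    also have "\<dots> < A1*A0" using l nn2 by (intro mult_strict_left_mono) auto
    finally have "B0*B1 < A0*A1" by (simp add: mult.commute)
    thus False using PQ by simp
  qed
  have sa: "A0 + A1 \<le> a" using mult_left_mono[OF tr(1) nn(1)] by (simp add: A0_def A1_def algebra_simps)
  have sb: "B0 + B1 \<le> b" using mult_left_mono[OF tr(2) nn(2)] by (simp add: B0_def B1_def algebra_simps)
  have pm1: "p * min a' b' \<le> p * a'" "p * min a' b' \<le> p * b'" using p by auto
  have "p * min a' b' \<le> a"
    using ca pm1 sa d0 d1 nn2 unfolding A0_def A1_def B0_def B1_def by linarith
  moreover have "p * min a' b' \<le> b"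
    using cb pm1 sb d0 d1 nn2 unfolding A0_def A1_def B0_def B1_def by linarith
  ultimately show ?thesis by simp
qed

lemma less2: "(i::nat) < 2 \<longleftrightarrow> i = 0 \<or> i = 1" by auto

definition kk :: "complex \<Rightarrow> complex \<Rightarrow> bool \<Rightarrow> nat \<Rightarrow> nat \<Rightarrow> complex" where
  "kk d0 d1 f i r = (if (i = r) \<noteq> f then (if i = 0 then d0 else d1) else 0)"

lemma kmap_lin: "lin_map2 (kmap K)"
  unfolding lin_map2_def
proof (intro conjI ballI allI)
  fix X :: "complex mat" assume "X \<in> carrier_mat 2 2" show "kmap K X \<in> carrier_mat 2 2" by (simp add: kmap_def)
next
  fix X Y :: "complex mat" and a b assume X: "X \<in> carrier_mat 2 2" and Y: "Y \<in> carrier_mat 2 2"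
  show "kmap K (a \<cdot>\<^sub>m X + b \<cdot>\<^sub>m Y) = a \<cdot>\<^sub>m kmap K X + b \<cdot>\<^sub>m kmap K Y"
    apply (rule eq_matI)
    using X Y by (auto simp: kmap_def sum2 algebra_simps)
qed

lemma piX: assumes "X \<in> carrier_mat 2 2"
  shows "piZ * X * piZ = mat 2 2 (\<lambda>(i,j). if i = j then X$$(i,j) else - X$$(i,j))"
  apply (rule eq_matI)
  using assms by (auto simp: piZ_def scalar_prod_def atLeast0LessThan sum2 less2)

lemma kk_cov: assumes "X \<in> carrier_mat 2 2"
  shows "kmap (kk d0 d1 f) (piZ * X * piZ) = piZ * kmap (kk d0 d1 f) X * piZ"
proof -
  have c: "kmap (kk d0 d1 f) X \<in> carrier_mat 2 2" by (simp add: kmap_def)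
  show ?thesis unfolding piX[OF assms] piX[OF c]
    by (rule eq_matI) (auto simp: kmap_def kk_def sum2 less2)
qed

lemma dcd: "d * z * cnj d = z * complex_of_real ((cmod d)^2)"
  by (simp only: complex_norm_square) (simp add: ac_simps)

lemma real_ofr: "z \<in> \<real> \<Longrightarrow> z = complex_of_real (Re z)"
  by (simp add: complex_is_Real_iff complex_eq_iff)

lemma kk_trace: assumes "cmod d0 \<le> 1" "cmod d1 \<le> 1"
  shows "trace_nonincreasing (kmap (kk d0 d1 f))"
  unfolding trace_nonincreasing_def
proof (intro allI impI)
  fix X assume X: "psd 2 X"
  from psd_entries[OF X, of 0 1] have e0: "X$$(0,0) \<in> \<real>" "0 \<le> Re (X$$(0,0))" by auto
  from psd_entries[OF X, of 1 0] have e1: "X$$(1,1) \<in> \<real>" "0 \<le> Re (X$$(1,1))" by auto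
  define x0 where "x0 = Re (X$$(0,0))"
  define x1 where "x1 = Re (X$$(1,1))"
  have X0: "X$$(0,0) = complex_of_real x0" using real_ofr[OF e0(1)] x0_def by simp
  have X1: "X$$(1,1) = complex_of_real x1" using real_ofr[OF e1(1)] x1_def by simp
  have X1': "X$$(Suc 0,Suc 0) = complex_of_real x1" using X1 by simp
  have q0: "(cmod d0)^2 \<le> 1" "(cmod d1)^2 \<le> 1" using assms by (auto simp: power_le_one)
  have m: "x * c \<le> x" if "0 \<le> x" "c \<le> 1" for x c :: real using that by (simp add: mult_left_le)
  have "Re (kmap (kk d0 d1 f) X $$ (0,0) + kmap (kk d0 d1 f) X $$ (1,1)) =
        (if f then x1 * (cmod d0)^2 + x0 * (cmod d1)^2 else x0 * (cmod d0)^2 + x1 * (cmod d1)^2)"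
    by (cases f) (simp_all add: kmap_def kk_def sum2 dcd X0 X1 X1')
  also have "\<dots> \<le> x0 + x1"
    using m[OF e0(2)[folded x0_def] q0(1)] m[OF e0(2)[folded x0_def] q0(2)]
      m[OF e1(2)[folded x1_def] q0(1)] m[OF e1(2)[folded x1_def] q0(2)] by auto
  finally show "Re (kmap (kk d0 d1 f) X $$ (0,0) + kmap (kk d0 d1 f) X $$ (1,1)) \<le> Re (X $$ (0,0) + X $$ (1,1))"
    by (simp add: x0_def x1_def)
qed

lemma kmap_proj: assumes "\<forall>i<2. (\<Sum>r<2. K i r * \<psi>$r) = complex_of_real s * \<phi>$i"
  shows "kmap K (proj \<psi>) = complex_of_real (s^2) \<cdot>\<^sub>m proj \<phi>"
proof (rule eq_matI)
  fix i j assume ij: "i < dim_row (complex_of_real (s^2) \<cdot>\<^sub>m proj \<phi>)" "j < dim_col (complex_of_real (s^2) \<cdot>\<^sub>m proj \<phi>)"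
  hence ij2: "i < 2" "j < 2" by (auto simp: proj_def)
  have "kmap K (proj \<psi>) $$ (i,j) = (\<Sum>r<2. K i r * \<psi>$r) * cnj (\<Sum>r<2. K j r * \<psi>$r)"
    using ij2 by (simp add: kmap_def proj_def sum2 algebra_simps)
  also have "\<dots> = complex_of_real s * \<phi>$i * cnj (complex_of_real s * \<phi>$j)" using assms ij2 by simp
  also have "\<dots> = (complex_of_real (s^2) \<cdot>\<^sub>m proj \<phi>) $$ (i,j)" using ij2 by (simp add: proj_def power2_eq_square)
  finally show "kmap K (proj \<psi>) $$ (i,j) = (complex_of_real (s^2) \<cdot>\<^sub>m proj \<phi>) $$ (i,j)" .
qed (auto simp: kmap_def proj_def)

lemma in_transf:
  assumes "cmod d0 \<le> 1" "cmod d1 \<le> 1" "\<forall>i<2. (\<Sum>r<2. kk d0 d1 f i r * \<psi>$r) = complex_of_real s * \<phi>$i"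
    "s^2 = p"
  shows "p \<in> transf_set \<psi> \<phi>"
  unfolding transf_set_def
proof (intro CollectI exI conjI)
  show "Z2_invariant_op (kmap (kk d0 d1 f))"
    unfolding Z2_invariant_op_def using kmap_lin kmap_cp kk_trace[OF assms(1,2)] kk_cov
    unfolding completely_positive_def by blast
  show "kmap (kk d0 d1 f) (proj \<psi>) = complex_of_real p \<cdot>\<^sub>m proj \<phi>"
    using kmap_proj[OF assms(3)] assms(4) by simp
qed

lemma mul_helper: fixes p q m c r :: real
  assumes "0 < m" "p*m = c" "c*q \<le> r*m" shows "p*q \<le> r"
proof -
  have "(p*q)*m = c*q" using assms(2) by (metis mult.commute mult.left_commute)
  hence "(p*q)*m \<le> r*m" using assms(3) by linarith
  thus ?thesis using assms(1) by (rule mult_right_le_imp_le)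
qed

lemma choose_real:
  fixes a b a' b' p :: real
  assumes nn: "0 \<le> a" "0 \<le> b" "0 \<le> a'" "0 \<le> b'" and s: "a + b = 1" "a' + b' = 1"
    and lt: "min a b < min a' b'" and pm: "p * min a' b' = min a b"
  shows "(p*a' \<le> a \<and> p*b' \<le> b) \<or> (p*a' \<le> b \<and> p*b' \<le> a)"
proof (cases "a \<le> b")
  case True
  show ?thesis
  proof (cases "a' \<le> b'")
    case True2: True
    have m: "0 < a'" "p*a' = a" "a \<le> a'" "b' \<le> b" using pm lt s nn True True2 by auto
    have "a*b' \<le> a'*b" using m nn by (intro mult_mono) auto
    hence "p*b' \<le> b" using mul_helper[of a' p a b' b] m by (simp add: mult.commute)
    thus ?thesis using m by simp
  next
    case False2: False
    have m: "0 < b'" "p*b' = a" "a \<le> b'" "a' \<le> b" using pm lt s nn True False2 by auto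
    have "a*a' \<le> b'*b" using m nn by (intro mult_mono) auto
    hence "p*a' \<le> b" using mul_helper[of b' p a a' b] m by (simp add: mult.commute)
    thus ?thesis using m by simp
  qed
next
  case False
  show ?thesis
  proof (cases "a' \<le> b'")
    case True2: True
    have m: "0 < a'" "p*a' = b" "b \<le> a'" "b' \<le> a" using pm lt s nn False True2 by auto
    have "b*b' \<le> a'*a" using m nn by (intro mult_mono) auto
    hence "p*b' \<le> a" using mul_helper[of a' p b b' a] m by (simp add: mult.commute)
    thus ?thesis using m by simp
  next
    case False2: False
    have m: "0 < b'" "p*b' = b" "b \<le> b'" "a' \<le> a" using pm lt s nn False False2 by auto
    have "b*a' \<le> b'*a" using m nn by (intro mult_mono) auto
    hence "p*a' \<le> a" using mul_helper[of b' p b a' a] m by (simp add: mult.commute)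
    thus ?thesis using m by simp
  qed
qed

lemma dbound: assumes "0 \<le> s" "z \<noteq> 0" "s^2 * (cmod w)^2 \<le> (cmod z)^2"
  shows "cmod (complex_of_real s * w / z) \<le> 1"
proof -
  have "(s * cmod w)^2 \<le> (cmod z)^2" using assms by (simp add: power_mult_distrib)
  hence "s * cmod w \<le> cmod z" by (rule power2_le_imp_le) simp
  thus ?thesis using assms by (simp add: norm_mult norm_divide divide_le_eq_1)
qed

lemma exist: assumes ps: "pure_state \<psi>" "pure_state \<phi>" and lt: "coh \<phi> > coh \<psi>"
  shows "coh \<psi> / coh \<phi> \<in> transf_set \<psi> \<phi>"
proof -
  define a where "a = (cmod (\<psi>$0))^2"
  define b where "b = (cmod (\<psi>$1))^2"
  define c where "c = (cmod (\<phi>$0))^2"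
  define d where "d = (cmod (\<phi>$1))^2"
  have ab: "a + b = 1" "c + d = 1" using ps unfolding pure_state_def a_def b_def c_def d_def by auto
  have nn: "0 \<le> a" "0 \<le> b" "0 \<le> c" "0 \<le> d" by (auto simp: a_def b_def c_def d_def)
  have cohs: "coh \<psi> = 2*min a b" "coh \<phi> = 2*min c d" by (auto simp: coh_def a_def b_def c_def d_def)
  define p where "p = coh \<psi>/coh \<phi>"
  have lt2: "min a b < min c d" using lt cohs by simp
  have mpos: "0 < min c d" using lt2 nn by linarith
  have pm: "p * min c d = min a b"
  proof -
    define mu where "mu = min a b"
    define m2 where "m2 = min c d"
    have "p = mu / m2" by (simp add: p_def cohs mu_def m2_def)
    moreover have "0 < m2" using mpos m2_def by simp
    ultimately have "p * m2 = mu" by simp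
    thus ?thesis by (simp add: mu_def m2_def)
  qed
  have p0: "0 \<le> p" using nn mpos by (simp add: p_def cohs)
  show ?thesis unfolding p_def[symmetric]
  proof (cases "min a b = 0")
    case True
    hence "p * min c d = 0" using pm by simp
    hence "p = 0" using mpos by simp
    show "p \<in> transf_set \<psi> \<phi>"
      by (rule in_transf[of 0 0 False \<psi> 0 \<phi>]) (auto simp: kk_def sum2 \<open>p = 0\<close> less2)
  next
    case False
    hence "0 < a" "0 < b" using nn by (auto simp: min_def split: if_splits)
    hence nz: "\<psi>$0 \<noteq> 0" "\<psi>$1 \<noteq> 0" by (auto simp: a_def b_def)
    define s where "s = sqrt p"
    have s: "0 \<le> s" "s^2 = p" using p0 by (auto simp: s_def)
    from choose_real[OF nn ab lt2 pm] show "p \<in> transf_set \<psi> \<phi>"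
    proof
      assume h: "p * c \<le> a \<and> p * d \<le> b"
      show ?thesis
      proof (rule in_transf[of "complex_of_real s * \<phi>$0 / \<psi>$0" "complex_of_real s * \<phi>$1 / \<psi>$1" False \<psi> s \<phi>])
        show "cmod (complex_of_real s * \<phi>$0 / \<psi>$0) \<le> 1"
          by (rule dbound) (use s nz h in \<open>auto simp: a_def c_def\<close>)
        show "cmod (complex_of_real s * \<phi>$1 / \<psi>$1) \<le> 1"
          by (rule dbound) (use s nz h in \<open>auto simp: b_def d_def\<close>)
        show "\<forall>i<2. (\<Sum>r<2. kk (complex_of_real s * \<phi>$0 / \<psi>$0) (complex_of_real s * \<phi>$1 / \<psi>$1) False i r * \<psi>$r) = complex_of_real s * \<phi>$i"
          using nz by (auto simp: kk_def sum2 less2)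
      qed (use s in auto)
    next
      assume h: "p * c \<le> b \<and> p * d \<le> a"
      show ?thesis
      proof (rule in_transf[of "complex_of_real s * \<phi>$0 / \<psi>$1" "complex_of_real s * \<phi>$1 / \<psi>$0" True \<psi> s \<phi>])
        show "cmod (complex_of_real s * \<phi>$0 / \<psi>$1) \<le> 1"
          by (rule dbound) (use s nz h in \<open>auto simp: b_def c_def\<close>)
        show "cmod (complex_of_real s * \<phi>$1 / \<psi>$0) \<le> 1"
          by (rule dbound) (use s nz h in \<open>auto simp: a_def d_def\<close>)
        show "\<forall>i<2. (\<Sum>r<2. kk (complex_of_real s * \<phi>$0 / \<psi>$1) (complex_of_real s * \<phi>$1 / \<psi>$0) True i r * \<psi>$r) = complex_of_real s * \<phi>$i"
          using nz by (auto simp: kk_def sum2 less2)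
      qed (use s in auto)
    qed
  qed
qed

definition UU :: "nat \<Rightarrow> nat \<Rightarrow> complex mat" where
  "UU I J = mat 2 2 (\<lambda>(r,s). if r = I \<and> s = J then 1 else 0)"

definition M4 :: "complex mat" where
  "M4 = mat 4 4 (\<lambda>(i,j). if (i = 0 \<or> i = 3) \<and> (j = 0 \<or> j = 3) then 1 else 0)"

lemma UU_car[simp]: "UU I J \<in> carrier_mat 2 2" by (simp add: UU_def)

lemma lin_add: assumes "lin_map2 E" "X \<in> carrier_mat 2 2" "Y \<in> carrier_mat 2 2"
  shows "E (X + Y) = E X + E Y"
proof -
  have "E (1 \<cdot>\<^sub>m X + 1 \<cdot>\<^sub>m Y) = 1 \<cdot>\<^sub>m E X + 1 \<cdot>\<^sub>m E Y" using assms unfolding lin_map2_def by blast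
  moreover have "1 \<cdot>\<^sub>m X + 1 \<cdot>\<^sub>m Y = X + Y" using assms(2,3) by (intro eq_matI) auto
  moreover have "E X \<in> carrier_mat 2 2" "E Y \<in> carrier_mat 2 2" using assms unfolding lin_map2_def by auto
  moreover have "1 \<cdot>\<^sub>m E X + 1 \<cdot>\<^sub>m E Y = E X + E Y" using calculation(3,4) by (intro eq_matI) auto
  ultimately show ?thesis by simp
qed

lemma lin_smult: assumes "lin_map2 E" "X \<in> carrier_mat 2 2"
  shows "E (c \<cdot>\<^sub>m X) = c \<cdot>\<^sub>m E X"
proof -
  have "E (c \<cdot>\<^sub>m X + 0 \<cdot>\<^sub>m X) = c \<cdot>\<^sub>m E X + 0 \<cdot>\<^sub>m E X" using assms unfolding lin_map2_def by blast
  moreover have "c \<cdot>\<^sub>m X + 0 \<cdot>\<^sub>m X = c \<cdot>\<^sub>m X" using assms(2) by (intro eq_matI) auto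
  moreover have "E X \<in> carrier_mat 2 2" using assms unfolding lin_map2_def by auto
  moreover have "c \<cdot>\<^sub>m E X + 0 \<cdot>\<^sub>m E X = c \<cdot>\<^sub>m E X" using calculation(3) by (intro eq_matI) auto
  ultimately show ?thesis by simp
qed

lemma even01: assumes "X \<in> carrier_mat 2 2" "piZ * X * piZ = X" shows "X$$(0,1) = 0"
proof -
  have "X$$(0,1) = (piZ * X * piZ)$$(0,1)" using assms by simp
  also have "\<dots> = - X$$(0,1)" unfolding piX[OF assms(1)] by simp
  finally show ?thesis by simp
qed

lemma odd_diag: assumes "X \<in> carrier_mat 2 2" "piZ * X * piZ = (-1) \<cdot>\<^sub>m X" shows "X$$(0,0) = 0" "X$$(1,1) = 0"
proof -
  have "X$$(0,0) = (piZ * X * piZ)$$(0,0)" unfolding piX[OF assms(1)] by simp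
  also have "\<dots> = - X$$(0,0)" using assms by simp
  finally show "X$$(0,0) = 0" by simp
  have "X$$(1,1) = (piZ * X * piZ)$$(1,1)" unfolding piX[OF assms(1)] by simp
  also have "\<dots> = - X$$(1,1)" using assms by simp
  finally show "X$$(1,1) = 0" by simp
qed

lemma piU_even: "I < 2 \<Longrightarrow> piZ * UU I I * piZ = UU I I"
  unfolding piX[OF UU_car] by (rule eq_matI) (auto simp: UU_def less2)

lemma piU_odd: "I < 2 \<Longrightarrow> J < 2 \<Longrightarrow> I \<noteq> J \<Longrightarrow> piZ * UU I J * piZ = (-1) \<cdot>\<^sub>m UU I J"
  unfolding piX[OF UU_car] by (rule eq_matI) (auto simp: UU_def less2)

lemma block_M4: "I < 2 \<Longrightarrow> J < 2 \<Longrightarrow> mat 2 2 (\<lambda>(r, s). M4 $$ (2 * I + r, 2 * J + s)) = UU I J"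
  by (rule eq_matI) (auto simp: UU_def M4_def less2)

lemma ampl_M4: "i < 4 \<Longrightarrow> j < 4 \<Longrightarrow> ampl 2 E M4 $$ (i,j) = E (UU (i div 2) (j div 2)) $$ (i mod 2, j mod 2)"
  unfolding ampl_def using block_M4[of "i div 2" "j div 2"] by simp

lemma ccz: "cnj z * z = complex_of_real ((cmod z)^2)"
  by (simp only: complex_norm_square mult.commute)

lemma psd_M4: "psd 4 M4"
  unfolding psd_def
proof (intro conjI ballI)
  show "M4 \<in> carrier_mat 4 4" by (simp add: M4_def)
  fix v :: "complex vec" assume "v \<in> carrier_vec 4"
  have eq: "(\<Sum>i<4. \<Sum>j<4. cnj (v $ i) * M4 $$ (i, j) * v $ j) = cnj (v$0 + v$3) * (v$0 + v$3)"
    by (simp add: sum4 M4_def algebra_simps)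
  show "(\<Sum>i<4. \<Sum>j<4. cnj (v $ i) * M4 $$ (i, j) * v $ j) \<in> \<real>" unfolding eq ccz by simp
  show "0 \<le> Re (\<Sum>i<4. \<Sum>j<4. cnj (v $ i) * M4 $$ (i, j) * v $ j)" unfolding eq ccz by simp
qed

lemma psd_UU: "I < 2 \<Longrightarrow> psd 2 (UU I I)"
  unfolding psd_def
proof (intro conjI ballI)
  assume "I < 2"
  show "UU I I \<in> carrier_mat 2 2" by simp
  fix v :: "complex vec" assume "v \<in> carrier_vec 2"
  have eq: "(\<Sum>i<2. \<Sum>j<2. cnj (v $ i) * UU I I $$ (i, j) * v $ j) = cnj (v$I) * v$I"
    using \<open>I < 2\<close> by (auto simp: sum2 UU_def less2)
  show "(\<Sum>i<2. \<Sum>j<2. cnj (v $ i) * UU I I $$ (i, j) * v $ j) \<in> \<real>" unfolding eq ccz by simp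
  show "0 \<le> Re (\<Sum>i<2. \<Sum>j<2. cnj (v $ i) * UU I I $$ (i, j) * v $ j)" unfolding eq ccz by simp
qed

lemma proj_dec: assumes "\<psi> \<in> carrier_vec 2"
  shows "proj \<psi> = ((\<psi>$0 * cnj (\<psi>$0)) \<cdot>\<^sub>m UU 0 0 + (\<psi>$1 * cnj (\<psi>$1)) \<cdot>\<^sub>m UU 1 1) +
                   ((\<psi>$0 * cnj (\<psi>$1)) \<cdot>\<^sub>m UU 0 1 + (\<psi>$1 * cnj (\<psi>$0)) \<cdot>\<^sub>m UU 1 0)"
  by (rule eq_matI) (auto simp: proj_def UU_def less2)

lemma upper:
  assumes ps: "pure_state \<psi>" "pure_state \<phi>" and lt: "coh \<phi> > coh \<psi>"
    and E: "Z2_invariant_op E" and eq: "E (proj \<psi>) = complex_of_real p \<cdot>\<^sub>m proj \<phi>"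
  shows "p \<le> coh \<psi> / coh \<phi>"
proof -
  have lin: "lin_map2 E" and cp: "completely_positive E" and tn: "trace_nonincreasing E"
    and cov: "\<forall>X\<in>carrier_mat 2 2. E (piZ * X * piZ) = piZ * E X * piZ"
    using E unfolding Z2_invariant_op_def by auto
  have Ecar: "\<And>X. X \<in> carrier_mat 2 2 \<Longrightarrow> E X \<in> carrier_mat 2 2" using lin unfolding lin_map2_def by auto
  have psic: "\<psi> \<in> carrier_vec 2" using ps unfolding pure_state_def by auto
  define E00 where "E00 = E (UU 0 0)"
  define E11 where "E11 = E (UU 1 1)"
  define E01 where "E01 = E (UU 0 1)"
  define E10 where "E10 = E (UU 1 0)"
  have car: "E00 \<in> carrier_mat 2 2" "E11 \<in> carrier_mat 2 2" "E01 \<in> carrier_mat 2 2" "E10 \<in> carrier_mat 2 2"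
    by (auto simp: E00_def E11_def E01_def E10_def Ecar)
  have "piZ * E00 * piZ = E00" using cov[rule_format, OF UU_car[of 0 0]] piU_even[of 0] by (simp add: E00_def)
  hence ev0: "E00$$(0,1) = 0" using even01 car by blast
  have "piZ * E11 * piZ = E11" using cov[rule_format, OF UU_car[of 1 1]] piU_even[of 1] by (simp add: E11_def)
  hence ev1: "E11$$(0,1) = 0" using even01 car by blast
  have "piZ * E01 * piZ = (-1) \<cdot>\<^sub>m E01"
    using cov[rule_format, OF UU_car[of 0 1]] piU_odd[of 0 1] lin_smult[OF lin, of "UU 0 1" "-1"] by (simp add: E01_def)
  hence od0: "E01$$(0,0) = 0" "E01$$(1,1) = 0" using odd_diag car by blast+
  have "piZ * E10 * piZ = (-1) \<cdot>\<^sub>m E10"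
    using cov[rule_format, OF UU_car[of 1 0]] piU_odd[of 1 0] lin_smult[OF lin, of "UU 1 0" "-1"] by (simp add: E10_def)
  hence od1: "E10$$(0,0) = 0" "E10$$(1,1) = 0" using odd_diag car by blast+
  define c00 where "c00 = \<psi>$0 * cnj (\<psi>$0)"
  define c11 where "c11 = \<psi>$1 * cnj (\<psi>$1)"
  define c01 where "c01 = \<psi>$0 * cnj (\<psi>$1)"
  define c10 where "c10 = \<psi>$1 * cnj (\<psi>$0)"
  have dec: "E (proj \<psi>) = (c00 \<cdot>\<^sub>m E00 + c11 \<cdot>\<^sub>m E11) + (c01 \<cdot>\<^sub>m E01 + c10 \<cdot>\<^sub>m E10)"
    unfolding proj_dec[OF psic]
    by (simp add: lin_add[OF lin] lin_smult[OF lin] E00_def E11_def E01_def E10_def c00_def c11_def c01_def c10_def)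
  have ent: "E (proj \<psi>) $$ (i,j) = c00 * E00$$(i,j) + c11 * E11$$(i,j) + (c01 * E01$$(i,j) + c10 * E10$$(i,j))"
    if "i < 2" "j < 2" for i j
    unfolding dec using car that by simp
  have peq: "E (proj \<psi>) $$ (i,j) = complex_of_real p * (\<phi>$i * cnj (\<phi>$j))" if "i < 2" "j < 2" for i j
    unfolding eq using that by (simp add: proj_def)
  \<comment> \<open>Choi matrix\<close>
  define C where "C = ampl 2 E M4"
  have psdC: "psd 4 C" using cp psd_M4 unfolding completely_positive_def C_def
    by (metis mult_2 numeral_Bit0)
  have C00: "C$$(0,0) = E00$$(0,0)" by (simp add: C_def ampl_M4 E00_def)
  have C11: "C$$(1,1) = E00$$(1,1)" by (simp add: C_def ampl_M4 E00_def)
  have C22: "C$$(2,2) = E11$$(0,0)" by (simp add: C_def ampl_M4 E11_def)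
  have C33: "C$$(3,3) = E11$$(1,1)" by (simp add: C_def ampl_M4 E11_def)
  have C03: "C$$(0,3) = E01$$(0,1)" by (simp add: C_def ampl_M4 E01_def)
  have C21: "C$$(2,1) = E10$$(0,1)" by (simp add: C_def ampl_M4 E10_def)
  note P03 = psd_entries[OF psdC, of 0 3, simplified]
  note P30 = psd_entries[OF psdC, of 3 0, simplified]
  note P21 = psd_entries[OF psdC, of 2 1, simplified]
  note P12 = psd_entries[OF psdC, of 1 2, simplified]
  define x0 where "x0 = Re (E00$$(0,0))"
  define x1 where "x1 = Re (E00$$(1,1))"
  define y0 where "y0 = Re (E11$$(0,0))"
  define y1 where "y1 = Re (E11$$(1,1))"
  define U where "U = cmod (E01$$(0,1))"
  define W where "W = cmod (E10$$(0,1))"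
  have rx0: "E00$$(0,0) = complex_of_real x0" using real_ofr P03 C00 x0_def by simp
  have rx1: "E00$$(1,1) = complex_of_real x1" using real_ofr P12 C11 x1_def by simp
  have ry0: "E11$$(0,0) = complex_of_real y0" using real_ofr P21 C22 y0_def by simp
  have ry1: "E11$$(1,1) = complex_of_real y1" using real_ofr P30 C33 y1_def by simp
  have nnx: "0 \<le> x0" "0 \<le> x1" "0 \<le> y0" "0 \<le> y1" "0 \<le> U" "0 \<le> W"
    using P03 P12 P21 P30 C00 C11 C22 C33 by (auto simp: x0_def x1_def y0_def y1_def U_def W_def)
  have UW: "U^2 \<le> x0 * y1" "W^2 \<le> x1 * y0"
    using P03 P21 C00 C11 C22 C33 C03 C21 by (auto simp: x0_def x1_def y0_def y1_def U_def W_def mult.commute)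
  have tr: "x0 + x1 \<le> 1" "y0 + y1 \<le> 1"
    using tn psd_UU[of 0] psd_UU[of 1] unfolding trace_nonincreasing_def
    by (auto simp: x0_def x1_def y0_def y1_def E00_def E11_def UU_def)
  define a where "a = (cmod (\<psi>$0))^2"
  define b where "b = (cmod (\<psi>$1))^2"
  define c where "c = (cmod (\<phi>$0))^2"
  define d where "d = (cmod (\<phi>$1))^2"
  have ab: "a + b = 1" "c + d = 1" using ps unfolding pure_state_def a_def b_def c_def d_def by auto
  have nn: "0 \<le> a" "0 \<le> b" "0 \<le> c" "0 \<le> d" by (auto simp: a_def b_def c_def d_def)
  have cohs: "coh \<psi> = 2*min a b" "coh \<phi> = 2*min c d" by (auto simp: coh_def a_def b_def c_def d_def)
  have lt2: "min a b < min c d" using lt cohs by simp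
  have mpos: "0 < min c d" using lt2 nn by linarith
  have cd: "0 < c" "0 < d" using mpos by auto
  have c00r: "c00 = complex_of_real a" unfolding c00_def a_def by (simp only: complex_norm_square)
  have c11r: "c11 = complex_of_real b" unfolding c11_def b_def by (simp only: complex_norm_square)
  have pc: "\<phi>$0 * cnj (\<phi>$0) = complex_of_real c" unfolding c_def by (simp only: complex_norm_square)
  have pd: "\<phi>$1 * cnj (\<phi>$1) = complex_of_real d" unfolding d_def by (simp only: complex_norm_square)
  have d0: "a * x0 + b * y0 = p * c"
  proof -
    have "complex_of_real (a * x0 + b * y0) = complex_of_real (p * c)"
      using ent[of 0 0] peq[of 0 0] by (simp add: c00r c11r rx0 ry0 od0 od1 pc)
    thus ?thesis by (simp only: of_real_eq_iff)
  qed
  have d1: "a * x1 + b * y1 = p * d"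
  proof -
    have "complex_of_real (a * x1 + b * y1) = complex_of_real (p * d)"
    proof -
      have e: "complex_of_real a * E00$$(1,1) + complex_of_real b * E11$$(1,1) + (c01 * E01$$(1,1) + c10*E10$$(1,1)) = complex_of_real p * (\<phi>$1 * cnj (\<phi>$1))"
        using ent[of 1 1] peq[of 1 1] c00r c11r by simp
      show ?thesis using e unfolding rx1 ry1 od0 od1 pd by simp
    qed
    thus ?thesis by (simp only: of_real_eq_iff)
  qed
  have offeq: "c01 * E01$$(0,1) + c10 * E10$$(0,1) = complex_of_real p * (\<phi>$0 * cnj (\<phi>$1))"
  proof -
    have e: "c00 * E00$$(0,1) + c11 * E11$$(0,1) + (c01 * E01$$(0,1) + c10 * E10$$(0,1)) = complex_of_real p * (\<phi>$0 * cnj (\<phi>$1))"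
      using ent[of 0 1] peq[of 0 1] by simp
    show ?thesis using e unfolding ev0 ev1 by simp
  qed
  have "\<bar>p\<bar> * (cmod (\<phi>$0) * cmod (\<phi>$1)) = cmod (c01 * E01$$(0,1) + c10 * E10$$(0,1))"
    unfolding offeq by (simp add: norm_mult)
  also have "\<dots> \<le> cmod (c01 * E01$$(0,1)) + cmod (c10 * E10$$(0,1))" by (rule norm_triangle_ineq)
  also have "\<dots> = cmod (\<psi>$0) * cmod (\<psi>$1) * (U + W)"
    by (simp add: c01_def c10_def U_def W_def norm_mult algebra_simps)
  finally have off1: "\<bar>p\<bar> * (cmod (\<phi>$0) * cmod (\<phi>$1)) \<le> cmod (\<psi>$0) * cmod (\<psi>$1) * (U + W)" .
  have "(\<bar>p\<bar> * (cmod (\<phi>$0) * cmod (\<phi>$1)))^2 \<le> (cmod (\<psi>$0) * cmod (\<psi>$1) * (U + W))^2"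
    by (rule power_mono[OF off1]) simp
  hence off: "p^2 * (c * d) \<le> a * b * (U + W)^2"
    by (simp add: a_def b_def c_def d_def power_mult_distrib power2_abs)
  show ?thesis
  proof (cases "p \<le> 0")
    case True
    have "0 \<le> min a b / min c d" by (rule divide_nonneg_nonneg) (use nn in auto)
    thus ?thesis using True cohs by simp
  next
    case False
    hence "p * min c d \<le> min a b"
      using key_real[OF nn(1,2) nnx cd tr UW d0 d1 off] by simp
    thus ?thesis using mpos unfolding cohs by (simp add: pos_le_divide_eq mult.commute)
  qed
qed

theorem theorem14:
  fixes \<psi> \<phi> :: "complex vec"
  assumes "pure_state \<psi>" and "pure_state \<phi>"
    and "coh \<phi> > coh \<psi>"
  shows "coh \<psi> / coh \<phi> \<in> transf_set \<psi> \<phi> \<and> (\<forall>p \<in> transf_set \<psi> \<phi>. p \<le> coh \<psi> / coh \<phi>)"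
proof
  show "coh \<psi> / coh \<phi> \<in> transf_set \<psi> \<phi>" by (rule exist[OF assms])
  show "\<forall>p \<in> transf_set \<psi> \<phi>. p \<le> coh \<psi> / coh \<phi>"
  proof
    fix p assume "p \<in> transf_set \<psi> \<phi>"
    then obtain E where "Z2_invariant_op E" "E (proj \<psi>) = complex_of_real p \<cdot>\<^sub>m proj \<phi>"
      unfolding transf_set_def by blast
    thus "p \<le> coh \<psi> / coh \<phi>" using upper[OF assms] by blast
  qed
qed
end
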